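(* Let $(X_i)_{i\in\mathbb{Z}}$ be a stationary strongly nonergodic process over a finite alphabet $\mathbb{X}$, with associated IID binary process $(Z_k)_{k\in\mathbb{N}}$ ($P(Z_k=0)=P(Z_k=1)=\tfrac12$) and functions $s_k:\mathbb{X}^*\to\{0,1\}$ satisfying $\lim_{n\to\infty}P(s_k(X_{t+1:t+n})=Z_k)=1$ for all $k\in\mathbb{N}$, $t\in\mathbb{Z}$. Let $\delta\in(\tfrac12,1)$, $U_\delta(n):=\{k\in\mathbb{N}:P(s_k(X_{1:n})=Z_k)\ge\delta\}$ and $$H^U(n):=hn+[\log2-\eta(\delta)]\operatorname{card}U_\delta(n),\qquad \eta(p):=-p\log p-(1-p)\log(1-p).$$ Then $H(n)\ge H^U(n)$ for all $n$, and $$\lim_{n\to\infty}H(n)/n=h=\lim_{n\to\infty}H^U(n)/n.$$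
   Context: $H(n):=H(X_{t+1:t+n})=-\mathbb{E}\log P(X_{t+1:t+n})$ (natural log), $h:=\lim_n H(n)/n$ is the entropy rate. A process is strongly nonergodic if such $(Z_k)$ and $s_k$ as in the claim exist. *)

theory Defs
  imports "HOL-Probability.Probability"
begin

definition block :: "(int \<Rightarrow> 'w \<Rightarrow> 'a) \<Rightarrow> int \<Rightarrow> nat \<Rightarrow> 'w \<Rightarrow> 'a list" where
  "block X t n \<omega> = map (\<lambda>i. X (t + int i) \<omega>) [1..<n+1]"

definition stationary :: "'w measure \<Rightarrow> (int \<Rightarrow> 'w \<Rightarrow> 'a) \<Rightarrow> bool" where
  "stationary M X \<longleftrightarrow> (\<forall>t n A. measure M {\<omega>\<in>space M. block X t n \<omega> \<in> A}
                                 = measure M {\<omega>\<in>space M. block X 0 n \<omega> \<in> A})"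

definition block_entropy :: "'w measure \<Rightarrow> (int \<Rightarrow> 'w \<Rightarrow> 'a) \<Rightarrow> nat \<Rightarrow> real" where
  "block_entropy M X n =
     - (\<integral>\<omega>. ln (measure M {\<omega>'\<in>space M. block X 0 n \<omega>' = block X 0 n \<omega>}) \<partial>M)"

definition entropy_rate :: "'w measure \<Rightarrow> (int \<Rightarrow> 'w \<Rightarrow> 'a) \<Rightarrow> real" where
  "entropy_rate M X = lim (\<lambda>n. block_entropy M X n / real n)"

definition bin_entropy :: "real \<Rightarrow> real" where
  "bin_entropy p = - p * ln p - (1 - p) * ln (1 - p)"

definition U_delta :: "'w measure \<Rightarrow> (int \<Rightarrow> 'w \<Rightarrow> 'a) \<Rightarrow> (nat \<Rightarrow> 'w \<Rightarrow> bool)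
    \<Rightarrow> (nat \<Rightarrow> 'a list \<Rightarrow> bool) \<Rightarrow> real \<Rightarrow> nat \<Rightarrow> nat set" where
  "U_delta M X Z s \<delta> n = {k. measure M {\<omega>\<in>space M. s k (block X 0 n \<omega>) = Z k \<omega>} \<ge> \<delta>}"

definition HU :: "'w measure \<Rightarrow> (int \<Rightarrow> 'w \<Rightarrow> 'a) \<Rightarrow> (nat \<Rightarrow> 'w \<Rightarrow> bool)
    \<Rightarrow> (nat \<Rightarrow> 'a list \<Rightarrow> bool) \<Rightarrow> real \<Rightarrow> nat \<Rightarrow> real" where
  "HU M X Z s \<delta> n = entropy_rate M X * real n
      + (ln 2 - bin_entropy \<delta>) * real (card (U_delta M X Z s \<delta> n))"

end

theory Submission
  imports Defs
begin


definition pv :: "'w measure \<Rightarrow> ('w \<Rightarrow> 'b) \<Rightarrow> 'b \<Rightarrow> real" where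
  "pv M f x = measure M {\<omega>\<in>space M. f \<omega> = x}"

definition ent :: "'w measure \<Rightarrow> ('w \<Rightarrow> 'b) \<Rightarrow> real" where
  "ent M f = - (\<Sum>x\<in>f ` space M. pv M f x * ln (pv M f x))"

definition rv :: "'w measure \<Rightarrow> ('w \<Rightarrow> 'b) \<Rightarrow> bool" where
  "rv M f \<longleftrightarrow> finite (f ` space M) \<and> (\<forall>x. {\<omega>\<in>space M. f \<omega> = x} \<in> sets M)"

context prob_space
begin

lemma rv_sets: "rv M f \<Longrightarrow> {\<omega>\<in>space M. f \<omega> = x} \<in> sets M"
  by (simp add: rv_def)

lemma rv_fin: "rv M f \<Longrightarrow> finite (f ` space M)"
  by (simp add: rv_def)

lemma rv_pair: "rv M f \<Longrightarrow> rv M g \<Longrightarrow> rv M (\<lambda>\<omega>. (f \<omega>, g \<omega>))"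
proof -
  assume f: "rv M f" and g: "rv M g"
  have "(\<lambda>\<omega>. (f \<omega>, g \<omega>)) ` space M \<subseteq> f ` space M \<times> g ` space M" by auto
  then have "finite ((\<lambda>\<omega>. (f \<omega>, g \<omega>)) ` space M)"
    using finite_subset finite_cartesian_product[OF rv_fin[OF f] rv_fin[OF g]] by blast
  moreover have "{\<omega>\<in>space M. (f \<omega>, g \<omega>) = x} \<in> sets M" for x
  proof -
    have "{\<omega>\<in>space M. (f \<omega>, g \<omega>) = x} = {\<omega>\<in>space M. f \<omega> = fst x} \<inter> {\<omega>\<in>space M. g \<omega> = snd x}"
      by (cases x) auto
    then show ?thesis using sets.Int[OF rv_sets[OF f] rv_sets[OF g]] by simp
  qed
  ultimately show ?thesis by (simp add: rv_def)
qed

lemma rv_comp: "rv M f \<Longrightarrow> rv M (\<lambda>\<omega>. g (f \<omega>))"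
proof -
  assume f: "rv M f"
  have "(\<lambda>\<omega>. g (f \<omega>)) ` space M = g ` f ` space M" by auto
  then have "finite ((\<lambda>\<omega>. g (f \<omega>)) ` space M)" using rv_fin[OF f] by simp
  moreover have "{\<omega>\<in>space M. g (f \<omega>) = x} \<in> sets M" for x
  proof -
    have "{\<omega>\<in>space M. g (f \<omega>) = x} = (\<Union>y\<in>{y\<in>f ` space M. g y = x}. {\<omega>\<in>space M. f \<omega> = y})"
      by auto
    then show ?thesis using rv_sets[OF f] rv_fin[OF f] by (metis (no_types, lifting) finite_subset mem_Collect_eq subsetI sets.finite_UN)
  qed
  ultimately show ?thesis by (simp add: rv_def)
qed

lemma rv_const: "rv M (\<lambda>\<omega>. c)"
proof -
  have "finite ((\<lambda>\<omega>. c) ` space M)" by (auto simp: image_constant_conv)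
  moreover have "{\<omega>\<in>space M. c = x} \<in> sets M" for x by (cases "c = x") auto
  ultimately show ?thesis by (simp add: rv_def)
qed

lemma pv_nonneg: "0 \<le> pv M f x" by (simp add: pv_def)
lemma pv_le1: "pv M f x \<le> 1" by (simp add: pv_def)

lemma pv_out: "x \<notin> f ` space M \<Longrightarrow> pv M f x = 0"
proof -
  assume "x \<notin> f ` space M"
  then have "{\<omega>\<in>space M. f \<omega> = x} = {}" by auto
  then show ?thesis unfolding pv_def by (metis measure_empty)
qed

lemma ent_superset:
  assumes "finite S" "f ` space M \<subseteq> S"
  shows "ent M f = - (\<Sum>x\<in>S. pv M f x * ln (pv M f x))"
  unfolding ent_def
  by (rule arg_cong[where f=uminus], rule sum.mono_neutral_left) (use assms pv_out in auto)

lemma pv_marg: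
  assumes X: "rv M X" and Y: "rv M Y" and S: "finite S" "Y ` space M \<subseteq> S"
  shows "pv M X x = (\<Sum>y\<in>S. pv M (\<lambda>\<omega>. (X \<omega>, Y \<omega>)) (x, y))"
proof -
  have eq: "{\<omega>\<in>space M. X \<omega> = x} = (\<Union>y\<in>S. {\<omega>\<in>space M. (X \<omega>, Y \<omega>) = (x, y)})"
    using S by auto
  have "measure M (\<Union>y\<in>S. {\<omega>\<in>space M. (X \<omega>, Y \<omega>) = (x, y)})
      = (\<Sum>y\<in>S. measure M {\<omega>\<in>space M. (X \<omega>, Y \<omega>) = (x, y)})"
  proof (rule measure_finite_Union)
    show "finite S" by fact
    show "(\<lambda>y. {\<omega>\<in>space M. (X \<omega>, Y \<omega>) = (x, y)}) ` S \<subseteq> sets M"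
      using rv_sets[OF rv_pair[OF X Y]] by blast
    show "disjoint_family_on (\<lambda>y. {\<omega>\<in>space M. (X \<omega>, Y \<omega>) = (x, y)}) S"
      by (auto simp: disjoint_family_on_def)
    show "emeasure M {\<omega>\<in>space M. (X \<omega>, Y \<omega>) = (x, y)} \<noteq> \<infinity>" for y
      by (simp add: emeasure_eq_measure)
  qed
  then show ?thesis unfolding pv_def eq by simp
qed

lemma pv_sum1:
  assumes X: "rv M X" and S: "finite S" "X ` space M \<subseteq> S"
  shows "(\<Sum>x\<in>S. pv M X x) = 1"
proof -
  have "pv M (\<lambda>\<omega>. ()) () = 1" by (simp add: pv_def prob_space)
  moreover have "pv M (\<lambda>\<omega>. ()) () = (\<Sum>x\<in>S. pv M (\<lambda>\<omega>. ((), X \<omega>)) ((), x))"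
    by (rule pv_marg[OF rv_const X S])
  moreover have "pv M (\<lambda>\<omega>. ((), X \<omega>)) ((), x) = pv M X x" for x
    by (simp add: pv_def)
  ultimately show ?thesis by simp
qed

lemma ent_inj:
  assumes X: "rv M X" and inj: "inj_on g (X ` space M)"
  shows "ent M (\<lambda>\<omega>. g (X \<omega>)) = ent M X"
proof -
  have im: "(\<lambda>\<omega>. g (X \<omega>)) ` space M = g ` X ` space M" by auto
  have pv: "pv M (\<lambda>\<omega>. g (X \<omega>)) (g x) = pv M X x" if "x \<in> X ` space M" for x
  proof -
    have "{\<omega>\<in>space M. g (X \<omega>) = g x} = {\<omega>\<in>space M. X \<omega> = x}"
      using inj that by (auto simp: inj_on_def)
    then show ?thesis by (simp add: pv_def)
  qed
  show ?thesis unfolding ent_def im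
    by (subst sum.reindex[OF inj]) (simp add: pv)
qed

lemma ent_const: "ent M (\<lambda>\<omega>. c) = 0"
proof -
  have "ent M (\<lambda>\<omega>. c) = - (\<Sum>x\<in>{c}. pv M (\<lambda>\<omega>. c) x * ln (pv M (\<lambda>\<omega>. c) x))"
    by (rule ent_superset) auto
  also have "\<dots> = - (1 * ln 1)" by (simp add: pv_def prob_space)
  finally show ?thesis by simp
qed

lemma ent_nonneg: "0 \<le> ent M f"
proof -
  have "pv M f x * ln (pv M f x) \<le> 0" for x
    using pv_nonneg[of f x] pv_le1[of f x]
    by (cases "pv M f x = 0") (auto intro!: mult_nonneg_nonpos)
  then show ?thesis unfolding ent_def by (simp add: sum_nonpos)
qed

end


lemma gibbs_term:
  fixes p u v w :: real
  assumes "0 \<le> p" "p \<le> u" "p \<le> v" "u \<le> w"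
  shows "p - u * v / w \<le> p * (ln p - ln u - ln v + ln w)"
proof (cases "p = 0")
  case True
  have "0 \<le> u * v / w" using assms by (simp add: True)
  then show ?thesis using True by simp
next
  case False
  then have p: "0 < p" using assms by simp
  have u: "0 < u" "0 < v" "0 < w" using assms p by linarith+
  have "ln (u * v / (w * p)) \<le> u * v / (w * p) - 1"
    using u p by (intro ln_le_minus_one) simp
  also have "ln (u * v / (w * p)) = ln u + ln v - ln w - ln p"
    using u p by (simp add: ln_div ln_mult)
  finally have "ln u + ln v - ln w - ln p \<le> u * v / (w * p) - 1" .
  then have "p * (ln u + ln v - ln w - ln p) \<le> p * (u * v / (w * p) - 1)"
    using p by (simp add: mult_left_mono)
  also have "p * (u * v / (w * p) - 1) = u * v / w - p" using p u by (simp add: field_simps)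
  finally show ?thesis by (simp add: algebra_simps)
qed

lemma submod_alg:
  fixes p :: "'a \<Rightarrow> 'b \<Rightarrow> 'c \<Rightarrow> real"
  assumes fin: "finite A" "finite B" "finite C"
    and nn: "\<And>a b c. 0 \<le> p a b c"
    and tot: "(\<Sum>a\<in>A. \<Sum>b\<in>B. \<Sum>c\<in>C. p a b c) = 1"
    and pac: "\<And>a c. pac a c = (\<Sum>b\<in>B. p a b c)"
    and pbc: "\<And>b c. pbc b c = (\<Sum>a\<in>A. p a b c)"
    and pc: "\<And>c. pc c = (\<Sum>a\<in>A. \<Sum>b\<in>B. p a b c)"
  shows "(\<Sum>a\<in>A. \<Sum>c\<in>C. pac a c * ln (pac a c)) + (\<Sum>b\<in>B. \<Sum>c\<in>C. pbc b c * ln (pbc b c))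
       \<le> (\<Sum>a\<in>A. \<Sum>b\<in>B. \<Sum>c\<in>C. p a b c * ln (p a b c)) + (\<Sum>c\<in>C. pc c * ln (pc c))"
proof -
  have pc1: "pc c = (\<Sum>a\<in>A. pac a c)" for c using pc pac by simp
  have pc2: "pc c = (\<Sum>b\<in>B. pbc b c)" for c unfolding pc pbc by (rule sum.swap)
  have s1: "(\<Sum>a\<in>A. \<Sum>b\<in>B. \<Sum>c\<in>C. p a b c * ln (pac a c)) = (\<Sum>a\<in>A. \<Sum>c\<in>C. pac a c * ln (pac a c))"
  proof (rule sum.cong[OF refl])
    fix a assume "a \<in> A"
    have "(\<Sum>b\<in>B. \<Sum>c\<in>C. p a b c * ln (pac a c)) = (\<Sum>c\<in>C. \<Sum>b\<in>B. p a b c * ln (pac a c))"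
      by (rule sum.swap)
    also have "\<dots> = (\<Sum>c\<in>C. pac a c * ln (pac a c))"
      by (simp add: pac sum_distrib_right)
    finally show "(\<Sum>b\<in>B. \<Sum>c\<in>C. p a b c * ln (pac a c)) = (\<Sum>c\<in>C. pac a c * ln (pac a c))" .
  qed
  have s2: "(\<Sum>a\<in>A. \<Sum>b\<in>B. \<Sum>c\<in>C. p a b c * ln (pbc b c)) = (\<Sum>b\<in>B. \<Sum>c\<in>C. pbc b c * ln (pbc b c))"
  proof -
    have "(\<Sum>a\<in>A. \<Sum>b\<in>B. \<Sum>c\<in>C. p a b c * ln (pbc b c)) = (\<Sum>b\<in>B. \<Sum>a\<in>A. \<Sum>c\<in>C. p a b c * ln (pbc b c))"
      by (rule sum.swap)
    also have "\<dots> = (\<Sum>b\<in>B. \<Sum>c\<in>C. \<Sum>a\<in>A. p a b c * ln (pbc b c))"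
      by (rule sum.cong[OF refl], rule sum.swap)
    also have "\<dots> = (\<Sum>b\<in>B. \<Sum>c\<in>C. pbc b c * ln (pbc b c))"
      by (simp add: pbc sum_distrib_right)
    finally show ?thesis .
  qed
  have s3: "(\<Sum>a\<in>A. \<Sum>b\<in>B. \<Sum>c\<in>C. p a b c * ln (pc c)) = (\<Sum>c\<in>C. pc c * ln (pc c))"
  proof -
    have "(\<Sum>a\<in>A. \<Sum>b\<in>B. \<Sum>c\<in>C. p a b c * ln (pc c)) = (\<Sum>a\<in>A. \<Sum>c\<in>C. pac a c * ln (pc c))"
    proof (rule sum.cong[OF refl])
      fix a assume "a \<in> A"
      have "(\<Sum>b\<in>B. \<Sum>c\<in>C. p a b c * ln (pc c)) = (\<Sum>c\<in>C. \<Sum>b\<in>B. p a b c * ln (pc c))"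
        by (rule sum.swap)
      also have "\<dots> = (\<Sum>c\<in>C. pac a c * ln (pc c))"
        by (simp add: pac sum_distrib_right)
      finally show "(\<Sum>b\<in>B. \<Sum>c\<in>C. p a b c * ln (pc c)) = (\<Sum>c\<in>C. pac a c * ln (pc c))" .
    qed
    also have "\<dots> = (\<Sum>c\<in>C. \<Sum>a\<in>A. pac a c * ln (pc c))" by (rule sum.swap)
    also have "\<dots> = (\<Sum>c\<in>C. pc c * ln (pc c))" by (simp add: pc1 sum_distrib_right)
    finally show ?thesis .
  qed
  have s4: "(\<Sum>a\<in>A. \<Sum>b\<in>B. \<Sum>c\<in>C. pac a c * pbc b c / pc c) = 1"
  proof -
    have "(\<Sum>a\<in>A. \<Sum>b\<in>B. \<Sum>c\<in>C. pac a c * pbc b c / pc c) = (\<Sum>a\<in>A. \<Sum>c\<in>C. \<Sum>b\<in>B. pac a c * pbc b c / pc c)"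
      by (rule sum.cong[OF refl], rule sum.swap)
    also have "\<dots> = (\<Sum>c\<in>C. \<Sum>a\<in>A. \<Sum>b\<in>B. pac a c * pbc b c / pc c)"
      by (rule sum.swap)
    also have "\<dots> = (\<Sum>c\<in>C. (\<Sum>a\<in>A. pac a c) * (\<Sum>b\<in>B. pbc b c) / pc c)"
      by (simp add: sum_product sum_divide_distrib)
    also have "\<dots> = (\<Sum>c\<in>C. pc c * pc c / pc c)"
      by (simp only: pc1[symmetric] pc2[symmetric])
    also have "\<dots> = (\<Sum>c\<in>C. pc c)" by (rule sum.cong[OF refl]) simp
    also have "\<dots> = 1" using tot pc sum.swap by (simp add: pc1 pac sum.swap[of _ C])
    finally show ?thesis .
  qed
  have le_pac: "p a b c \<le> pac a c" if "b \<in> B" for a b c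
    unfolding pac using fin nn that by (intro member_le_sum) auto
  have le_pbc: "p a b c \<le> pbc b c" if "a \<in> A" for a b c
    unfolding pbc using fin nn that by (intro member_le_sum) auto
  have le_pc: "pac a c \<le> pc c" if "a \<in> A" for a c
    unfolding pc1 using fin nn that by (intro member_le_sum) (auto simp: pac intro!: sum_nonneg)
  have "(\<Sum>a\<in>A. \<Sum>b\<in>B. \<Sum>c\<in>C. p a b c - pac a c * pbc b c / pc c)
     \<le> (\<Sum>a\<in>A. \<Sum>b\<in>B. \<Sum>c\<in>C. p a b c * (ln (p a b c) - ln (pac a c) - ln (pbc b c) + ln (pc c)))"
    by (intro sum_mono gibbs_term nn le_pac le_pbc le_pc)
  also have "(\<Sum>a\<in>A. \<Sum>b\<in>B. \<Sum>c\<in>C. p a b c - pac a c * pbc b c / pc c) = 0"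
    using tot s4 by (simp add: sum_subtractf)
  also have "(\<Sum>a\<in>A. \<Sum>b\<in>B. \<Sum>c\<in>C. p a b c * (ln (p a b c) - ln (pac a c) - ln (pbc b c) + ln (pc c)))
     = (\<Sum>a\<in>A. \<Sum>b\<in>B. \<Sum>c\<in>C. p a b c * ln (p a b c)) - (\<Sum>a\<in>A. \<Sum>c\<in>C. pac a c * ln (pac a c))
       - (\<Sum>b\<in>B. \<Sum>c\<in>C. pbc b c * ln (pbc b c)) + (\<Sum>c\<in>C. pc c * ln (pc c))"
    by (simp add: s1[symmetric] s2[symmetric] s3[symmetric] algebra_simps sum.distrib sum_subtractf)
  finally show ?thesis by simp
qed



lemma sum3: "(\<Sum>t\<in>A\<times>B\<times>C. f t) = (\<Sum>a\<in>A. \<Sum>b\<in>B. \<Sum>c\<in>C. (f (a,b,c)::real))"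
  by (simp add: sum.cartesian_product)
lemma sum2: "(\<Sum>t\<in>A\<times>B. f t) = (\<Sum>a\<in>A. \<Sum>b\<in>B. (f (a,b)::real))"
  by (simp add: sum.cartesian_product)

context prob_space
begin

lemma ent_submod:
  assumes X: "rv M X" and Y: "rv M Y" and Z: "rv M Z"
  shows "ent M (\<lambda>\<omega>. (X \<omega>, Y \<omega>, Z \<omega>)) + ent M Z \<le> ent M (\<lambda>\<omega>. (X \<omega>, Z \<omega>)) + ent M (\<lambda>\<omega>. (Y \<omega>, Z \<omega>))"
proof -
  define A where "A = X ` space M"
  define B where "B = Y ` space M"
  define C where "C = Z ` space M"
  have fin: "finite A" "finite B" "finite C" using X Y Z rv_fin A_def B_def C_def by auto
  define p where "p a b c = pv M (\<lambda>\<omega>. (X \<omega>, Y \<omega>, Z \<omega>)) (a, b, c)" for a b c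
  define pac where "pac a c = pv M (\<lambda>\<omega>. (X \<omega>, Z \<omega>)) (a, c)" for a c
  define pbc where "pbc b c = pv M (\<lambda>\<omega>. (Y \<omega>, Z \<omega>)) (b, c)" for b c
  define pc where "pc c = pv M Z c" for c
  have pac_eq: "pac a c = (\<Sum>b\<in>B. p a b c)" for a c
  proof -
    have "pac a c = (\<Sum>b\<in>B. pv M (\<lambda>\<omega>. ((X \<omega>, Z \<omega>), Y \<omega>)) ((a, c), b))"
      unfolding pac_def by (rule pv_marg[OF rv_pair[OF X Z] Y]) (use fin B_def in auto)
    also have "\<dots> = (\<Sum>b\<in>B. p a b c)"
      unfolding p_def pv_def by (intro sum.cong refl arg_cong[where f="measure M"]) auto
    finally show ?thesis .
  qed
  have pbc_eq: "pbc b c = (\<Sum>a\<in>A. p a b c)" for b c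
  proof -
    have "pbc b c = (\<Sum>a\<in>A. pv M (\<lambda>\<omega>. ((Y \<omega>, Z \<omega>), X \<omega>)) ((b, c), a))"
      unfolding pbc_def by (rule pv_marg[OF rv_pair[OF Y Z] X]) (use fin A_def in auto)
    also have "\<dots> = (\<Sum>a\<in>A. p a b c)"
      unfolding p_def pv_def by (intro sum.cong refl arg_cong[where f="measure M"]) auto
    finally show ?thesis .
  qed
  have pc_eq: "pc c = (\<Sum>a\<in>A. \<Sum>b\<in>B. p a b c)" for c
  proof -
    have "pc c = (\<Sum>a\<in>A. pv M (\<lambda>\<omega>. (Z \<omega>, X \<omega>)) (c, a))"
      unfolding pc_def by (rule pv_marg[OF Z X]) (use fin A_def in auto)
    also have "\<dots> = (\<Sum>a\<in>A. pac a c)"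
      unfolding pac_def pv_def by (intro sum.cong refl arg_cong[where f="measure M"]) auto
    finally show ?thesis by (simp add: pac_eq)
  qed
  have XYZ: "rv M (\<lambda>\<omega>. (X \<omega>, Y \<omega>, Z \<omega>))" using X Y Z by (intro rv_pair)
  have im3: "(\<lambda>\<omega>. (X \<omega>, Y \<omega>, Z \<omega>)) ` space M \<subseteq> A \<times> B \<times> C" unfolding A_def B_def C_def by auto
  have tot: "(\<Sum>a\<in>A. \<Sum>b\<in>B. \<Sum>c\<in>C. p a b c) = 1"
    using pv_sum1[OF XYZ _ im3] fin unfolding p_def by (simp add: sum3)
  have e1: "ent M (\<lambda>\<omega>. (X \<omega>, Y \<omega>, Z \<omega>)) = - (\<Sum>a\<in>A. \<Sum>b\<in>B. \<Sum>c\<in>C. p a b c * ln (p a b c))"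
    using ent_superset[OF _ im3] fin unfolding p_def by (simp add: sum3)
  have e2: "ent M (\<lambda>\<omega>. (X \<omega>, Z \<omega>)) = - (\<Sum>a\<in>A. \<Sum>c\<in>C. pac a c * ln (pac a c))"
    using ent_superset[of "A \<times> C" "\<lambda>\<omega>. (X \<omega>, Z \<omega>)"] fin unfolding pac_def
    by (simp add: sum2 A_def C_def image_subset_iff)
  have e3: "ent M (\<lambda>\<omega>. (Y \<omega>, Z \<omega>)) = - (\<Sum>b\<in>B. \<Sum>c\<in>C. pbc b c * ln (pbc b c))"
    using ent_superset[of "B \<times> C" "\<lambda>\<omega>. (Y \<omega>, Z \<omega>)"] fin unfolding pbc_def
    by (simp add: sum2 B_def C_def image_subset_iff)
  have e4: "ent M Z = - (\<Sum>c\<in>C. pc c * ln (pc c))"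
    using ent_superset[of C Z] fin unfolding pc_def by (simp add: C_def)
  have "(\<Sum>a\<in>A. \<Sum>c\<in>C. pac a c * ln (pac a c)) + (\<Sum>b\<in>B. \<Sum>c\<in>C. pbc b c * ln (pbc b c))
       \<le> (\<Sum>a\<in>A. \<Sum>b\<in>B. \<Sum>c\<in>C. p a b c * ln (p a b c)) + (\<Sum>c\<in>C. pc c * ln (pc c))"
    by (rule submod_alg[OF fin _ tot pac_eq pbc_eq pc_eq]) (simp add: p_def pv_nonneg)
  then show ?thesis using e1 e2 e3 e4 by linarith
qed

end


context prob_space
begin

lemma ent_inj':
  assumes X: "rv M X" and inj: "inj_on g (X ` space M)" and h: "h = (\<lambda>\<omega>. g (X \<omega>))"
  shows "ent M h = ent M X"
  using ent_inj[OF X inj] h by simp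

lemma ent_mono2:
  assumes X: "rv M X" and Y: "rv M Y"
  shows "ent M Y \<le> ent M (\<lambda>\<omega>. (X \<omega>, Y \<omega>))"
proof -
  have "ent M (\<lambda>\<omega>. (X \<omega>, X \<omega>, Y \<omega>)) + ent M Y \<le> ent M (\<lambda>\<omega>. (X \<omega>, Y \<omega>)) + ent M (\<lambda>\<omega>. (X \<omega>, Y \<omega>))"
    by (rule ent_submod[OF X X Y])
  moreover have "ent M (\<lambda>\<omega>. (X \<omega>, X \<omega>, Y \<omega>)) = ent M (\<lambda>\<omega>. (X \<omega>, Y \<omega>))"
    by (rule ent_inj'[OF rv_pair[OF X Y], where g="\<lambda>(x,y). (x,x,y)"]) (auto simp: inj_on_def)
  ultimately show ?thesis by simp
qed

lemma ent_dp:
  assumes X: "rv M X"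
  shows "ent M (\<lambda>\<omega>. g (X \<omega>)) \<le> ent M X"
proof -
  have "ent M (\<lambda>\<omega>. g (X \<omega>)) \<le> ent M (\<lambda>\<omega>. (X \<omega>, g (X \<omega>)))"
    by (rule ent_mono2[OF X rv_comp[OF X]])
  also have "\<dots> = ent M X"
    by (rule ent_inj'[OF X, where g="\<lambda>x. (x, g x)"]) (auto simp: inj_on_def)
  finally show ?thesis .
qed

lemma ent_subadd:
  assumes X: "rv M X" and Y: "rv M Y"
  shows "ent M (\<lambda>\<omega>. (X \<omega>, Y \<omega>)) \<le> ent M X + ent M Y"
proof -
  have "ent M (\<lambda>\<omega>. (X \<omega>, Y \<omega>, ())) + ent M (\<lambda>\<omega>. ()) \<le> ent M (\<lambda>\<omega>. (X \<omega>, ())) + ent M (\<lambda>\<omega>. (Y \<omega>, ()))"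
    by (rule ent_submod[OF X Y rv_const])
  moreover have "ent M (\<lambda>\<omega>. (X \<omega>, Y \<omega>, ())) = ent M (\<lambda>\<omega>. (X \<omega>, Y \<omega>))"
    by (rule ent_inj'[OF rv_pair[OF X Y], where g="\<lambda>(x,y). (x,y,())"]) (auto simp: inj_on_def)
  moreover have "ent M (\<lambda>\<omega>. (X \<omega>, ())) = ent M X"
    by (rule ent_inj'[OF X, where g="\<lambda>x. (x,())"]) (auto simp: inj_on_def)
  moreover have "ent M (\<lambda>\<omega>. (Y \<omega>, ())) = ent M Y"
    by (rule ent_inj'[OF Y, where g="\<lambda>x. (x,())"]) (auto simp: inj_on_def)
  ultimately show ?thesis by (simp add: ent_const)
qed

lemma ent_cond_proc:
  assumes X: "rv M X" and V: "rv M V"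
  shows "ent M (\<lambda>\<omega>. (X \<omega>, V \<omega>)) - ent M V \<le> ent M (\<lambda>\<omega>. (X \<omega>, g (V \<omega>))) - ent M (\<lambda>\<omega>. g (V \<omega>))"
proof -
  have gV: "rv M (\<lambda>\<omega>. g (V \<omega>))" by (rule rv_comp[OF V])
  have "ent M (\<lambda>\<omega>. (X \<omega>, V \<omega>, g (V \<omega>))) + ent M (\<lambda>\<omega>. g (V \<omega>))
     \<le> ent M (\<lambda>\<omega>. (X \<omega>, g (V \<omega>))) + ent M (\<lambda>\<omega>. (V \<omega>, g (V \<omega>)))"
    by (rule ent_submod[OF X V gV])
  moreover have "ent M (\<lambda>\<omega>. (X \<omega>, V \<omega>, g (V \<omega>))) = ent M (\<lambda>\<omega>. (X \<omega>, V \<omega>))"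
    by (rule ent_inj'[OF rv_pair[OF X V], where g="\<lambda>(x,v). (x,v,g v)"]) (auto simp: inj_on_def)
  moreover have "ent M (\<lambda>\<omega>. (V \<omega>, g (V \<omega>))) = ent M V"
    by (rule ent_inj'[OF V, where g="\<lambda>v. (v, g v)"]) (auto simp: inj_on_def)
  ultimately show ?thesis by simp
qed

lemma ent_bool:
  fixes D :: "'a \<Rightarrow> bool"
  assumes D: "rv M D"
  shows "ent M D = bin_entropy (pv M D True)"
proof -
  have "ent M D = - (\<Sum>x\<in>UNIV. pv M D x * ln (pv M D x))"
    by (rule ent_superset) auto
  moreover have "(\<Sum>x\<in>UNIV. pv M D x) = 1" by (rule pv_sum1[OF D]) auto
  then have "pv M D True + pv M D False = 1" by (simp add: UNIV_bool add.commute)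
  then have "pv M D False = 1 - pv M D True" by simp
  ultimately show ?thesis by (simp add: UNIV_bool bin_entropy_def)
qed

lemma ent_binary:
  fixes Zb W :: "'a \<Rightarrow> bool"
  assumes Z: "rv M Zb" and W: "rv M W"
  shows "ent M (\<lambda>\<omega>. (Zb \<omega>, W \<omega>)) - ent M W \<le> bin_entropy (pv M (\<lambda>\<omega>. Zb \<omega> \<noteq> W \<omega>) True)"
proof -
  have D: "rv M (\<lambda>\<omega>. Zb \<omega> \<noteq> W \<omega>)" using rv_comp[OF rv_pair[OF Z W], of "\<lambda>(z,w). z \<noteq> w"] by simp
  have "ent M (\<lambda>\<omega>. (Zb \<omega> \<noteq> W \<omega>, W \<omega>)) = ent M (\<lambda>\<omega>. (Zb \<omega>, W \<omega>))"
    by (rule ent_inj'[OF rv_pair[OF Z W], where g="\<lambda>(z,w). (z \<noteq> w, w)"]) (auto simp: inj_on_def)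
  moreover have "ent M (\<lambda>\<omega>. (Zb \<omega> \<noteq> W \<omega>, W \<omega>)) \<le> ent M (\<lambda>\<omega>. Zb \<omega> \<noteq> W \<omega>) + ent M W"
    by (rule ent_subadd[OF D W])
  ultimately show ?thesis using ent_bool[OF D] by simp
qed

end


context prob_space
begin

lemma rv_map:
  assumes Z: "\<And>k. rv M (Z k)"
  shows "rv M (\<lambda>\<omega>. map (\<lambda>k. Z k \<omega>) ks)"
proof (induction ks)
  case Nil
  then show ?case using rv_const[of "[]"] by simp
next
  case (Cons k ks)
  have "rv M (\<lambda>\<omega>. (\<lambda>(z, r). z # r) (Z k \<omega>, map (\<lambda>k. Z k \<omega>) ks))"
    by (rule rv_comp[OF rv_pair[OF Z Cons.IH]])
  then show ?case by simp
qed

lemma ent_cond_list: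
  assumes Z: "\<And>k. rv M (Z k)" and V: "rv M V"
  shows "ent M (\<lambda>\<omega>. (map (\<lambda>k. Z k \<omega>) ks, V \<omega>)) - ent M V
     \<le> (\<Sum>k\<leftarrow>ks. ent M (\<lambda>\<omega>. (Z k \<omega>, g k (V \<omega>))) - ent M (\<lambda>\<omega>. g k (V \<omega>)))"
proof (induction ks)
  case Nil
  have "ent M (\<lambda>\<omega>. ([] :: 'c list, V \<omega>)) = ent M V"
    by (rule ent_inj'[OF V, where g="\<lambda>v. ([], v)"]) (auto simp: inj_on_def)
  then show ?case by simp
next
  case (Cons k ks)
  define R where "R = (\<lambda>\<omega>. map (\<lambda>k. Z k \<omega>) ks)"
  have R: "rv M R" unfolding R_def by (rule rv_map[OF Z])
  have e1: "ent M (\<lambda>\<omega>. (map (\<lambda>k. Z k \<omega>) (k # ks), V \<omega>)) = ent M (\<lambda>\<omega>. (Z k \<omega>, R \<omega>, V \<omega>))"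
    by (rule ent_inj'[OF rv_pair[OF Z rv_pair[OF R V]], where g="\<lambda>(z, r, v). (z # r, v)"])
       (auto simp: inj_on_def R_def)
  have s: "ent M (\<lambda>\<omega>. (Z k \<omega>, R \<omega>, V \<omega>)) + ent M V \<le> ent M (\<lambda>\<omega>. (Z k \<omega>, V \<omega>)) + ent M (\<lambda>\<omega>. (R \<omega>, V \<omega>))"
    by (rule ent_submod[OF Z R V])
  have c: "ent M (\<lambda>\<omega>. (Z k \<omega>, V \<omega>)) - ent M V \<le> ent M (\<lambda>\<omega>. (Z k \<omega>, g k (V \<omega>))) - ent M (\<lambda>\<omega>. g k (V \<omega>))"
    by (rule ent_cond_proc[OF Z V])
  have IH: "ent M (\<lambda>\<omega>. (R \<omega>, V \<omega>)) - ent M V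
     \<le> (\<Sum>k\<leftarrow>ks. ent M (\<lambda>\<omega>. (Z k \<omega>, g k (V \<omega>))) - ent M (\<lambda>\<omega>. g k (V \<omega>)))"
    using Cons.IH unfolding R_def .
  show ?case using e1 s c IH by simp
qed

end


lemma length_block[simp]: "length (block X t n \<omega>) = n"
  by (simp add: block_def)

lemma block_append: "block X t (a + b) \<omega> = block X t a \<omega> @ block X (t + int a) b \<omega>"
proof (induction b)
  case 0 then show ?case by (simp add: block_def)
next
  case (Suc b)
  have "block X t (a + Suc b) \<omega> = block X t (a + b) \<omega> @ [X (t + int (a + b + 1)) \<omega>]"
    by (simp add: block_def)
  moreover have "block X (t + int a) (Suc b) \<omega> = block X (t + int a) b \<omega> @ [X (t + int a + int (b + 1)) \<omega>]"
    by (simp add: block_def)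
  ultimately show ?case using Suc by (simp add: algebra_simps)
qed

context prob_space
begin

lemma rv_meas:
  fixes f :: "'a \<Rightarrow> 'b::finite"
  assumes "f \<in> M \<rightarrow>\<^sub>M count_space UNIV"
  shows "rv M f"
proof -
  have "{\<omega>\<in>space M. f \<omega> = x} = f -` {x} \<inter> space M" for x by auto
  then show ?thesis using measurable_sets[OF assms, of "{x}" for x] unfolding rv_def by auto
qed

lemma rv_block:
  fixes X :: "int \<Rightarrow> 'a \<Rightarrow> 'b::finite"
  assumes "\<And>i. X i \<in> M \<rightarrow>\<^sub>M count_space UNIV"
  shows "rv M (block X t n)"
proof -
  have "rv M (\<lambda>\<omega>. map (\<lambda>i. X (t + int i) \<omega>) [1..<n+1])"
    by (rule rv_map) (rule rv_meas[OF assms])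
  moreover have "block X t n = (\<lambda>\<omega>. map (\<lambda>i. X (t + int i) \<omega>) [1..<n+1])"
    by (simp add: block_def fun_eq_iff)
  ultimately show ?thesis by simp
qed

lemma integral_rv:
  assumes f: "rv M f"
  shows "(\<integral>\<omega>. \<phi> (f \<omega>) \<partial>M) = (\<Sum>x\<in>f ` space M. pv M f x * \<phi> x)"
proof -
  have "(\<integral>\<omega>. \<phi> (f \<omega>) \<partial>M) = (\<integral>\<omega>. (\<Sum>x\<in>f ` space M. indicator {\<omega>\<in>space M. f \<omega> = x} \<omega> * \<phi> x) \<partial>M)"
  proof (rule Bochner_Integration.integral_cong[OF refl])
    fix \<omega> assume w: "\<omega> \<in> space M"
    have "(\<Sum>x\<in>f ` space M. indicator {\<omega>\<in>space M. f \<omega> = x} \<omega> * \<phi> x)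
        = (\<Sum>x\<in>f ` space M. if x = f \<omega> then \<phi> x else 0)"
      using w by (intro sum.cong refl) (auto simp: indicator_def)
    also have "\<dots> = \<phi> (f \<omega>)" using w rv_fin[OF f] by (simp add: sum.delta')
    finally show "\<phi> (f \<omega>) = (\<Sum>x\<in>f ` space M. indicator {\<omega>\<in>space M. f \<omega> = x} \<omega> * \<phi> x)" by simp
  qed
  also have "\<dots> = (\<Sum>x\<in>f ` space M. (\<integral>\<omega>. indicator {\<omega>\<in>space M. f \<omega> = x} \<omega> * \<phi> x \<partial>M))"
    by (rule Bochner_Integration.integral_sum[where f="\<lambda>x \<omega>. indicator {\<omega>\<in>space M. f \<omega> = x} \<omega> * \<phi> x"])
       (auto intro!: integrable_mult_left integrable_real_indicator rv_sets[OF f] simp: emeasure_eq_measure)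
  also have "\<dots> = (\<Sum>x\<in>f ` space M. pv M f x * \<phi> x)"
    by (intro sum.cong refl) (simp add: pv_def rv_sets[OF f])
  finally show ?thesis .
qed

lemma block_entropy_ent:
  fixes X :: "int \<Rightarrow> 'a \<Rightarrow> 'b::finite"
  assumes "\<And>i. X i \<in> M \<rightarrow>\<^sub>M count_space UNIV"
  shows "block_entropy M X n = ent M (block X 0 n)"
proof -
  have "block_entropy M X n = - (\<integral>\<omega>. ln (pv M (block X 0 n) (block X 0 n \<omega>)) \<partial>M)"
    unfolding block_entropy_def pv_def ..
  also have "\<dots> = ent M (block X 0 n)"
    unfolding ent_def by (subst integral_rv[OF rv_block[OF assms]]) simp
  finally show ?thesis .
qed

lemma ent_block_stat:
  fixes X :: "int \<Rightarrow> 'a \<Rightarrow> 'b::finite"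
  assumes "\<And>i. X i \<in> M \<rightarrow>\<^sub>M count_space UNIV" and st: "stationary M X"
  shows "ent M (block X t n) = ent M (block X 0 n)"
proof -
  have fin: "finite {xs :: 'b list. length xs = n}"
    using finite_lists_length_eq[of "UNIV :: 'b set" n] by simp
  have pv: "pv M (block X t n) xs = pv M (block X 0 n) xs" for xs
  proof -
    have "measure M {\<omega>\<in>space M. block X t n \<omega> \<in> {xs}} = measure M {\<omega>\<in>space M. block X 0 n \<omega> \<in> {xs}}"
      using st unfolding stationary_def by blast
    then show ?thesis by (simp add: pv_def)
  qed
  have "ent M (block X t n) = - (\<Sum>xs\<in>{xs. length xs = n}. pv M (block X t n) xs * ln (pv M (block X t n) xs))"
    by (rule ent_superset[OF fin]) auto
  also have "\<dots> = - (\<Sum>xs\<in>{xs. length xs = n}. pv M (block X 0 n) xs * ln (pv M (block X 0 n) xs))"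
    by (simp add: pv)
  also have "\<dots> = ent M (block X 0 n)"
    by (rule ent_superset[OF fin, symmetric]) auto
  finally show ?thesis .
qed

lemma ent_join:
  fixes X :: "int \<Rightarrow> 'a \<Rightarrow> 'b::finite"
  assumes "\<And>i. X i \<in> M \<rightarrow>\<^sub>M count_space UNIV"
  shows "ent M (\<lambda>\<omega>. (block X t a \<omega>, block X (t + int a) b \<omega>)) = ent M (block X t (a + b))"
proof -
  have "ent M (block X t (a + b)) = ent M (\<lambda>\<omega>. (block X t a \<omega>, block X (t + int a) b \<omega>))"
    by (rule ent_inj'[OF rv_pair[OF rv_block[OF assms] rv_block[OF assms]], where g="\<lambda>(u, v). u @ v"])
       (auto simp: inj_on_def block_append fun_eq_iff)
  then show ?thesis by simp
qed

end


lemma map_eq_iff_map_of: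
  assumes "distinct ks" "length v = length ks"
  shows "(map f ks = v) \<longleftrightarrow> (\<forall>k\<in>set ks. f k = the (map_of (zip ks v) k))"
  using assms
proof (induction ks arbitrary: v)
  case Nil then show ?case by simp
next
  case (Cons k ks)
  then obtain b w where v: "v = b # w" "length w = length ks" by (cases v) auto
  have "(\<forall>k'\<in>set (k # ks). f k' = the (map_of (zip (k # ks) v) k'))
     \<longleftrightarrow> f k = b \<and> (\<forall>k'\<in>set ks. f k' = the (map_of (zip ks w) k'))"
    using Cons.prems v by (auto split: if_splits)
  then show ?case using Cons.IH[of w] Cons.prems v by auto
qed

context prob_space
begin

lemma ent_Zs:
  fixes Z :: "nat \<Rightarrow> 'a \<Rightarrow> bool"
  assumes ind: "indep_vars (\<lambda>_. count_space UNIV) Z UNIV"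
    and half: "\<And>k. measure M {\<omega>\<in>space M. Z k \<omega>} = 1/2"
    and ks: "distinct ks"
  shows "ent M (\<lambda>\<omega>. map (\<lambda>k. Z k \<omega>) ks) = real (length ks) * ln 2"
proof -
  have Zm: "Z k \<in> M \<rightarrow>\<^sub>M count_space UNIV" for k
    using ind unfolding indep_vars_def by auto
  have pZ: "prob (Z k -` {c} \<inter> space M) = 1/2" for k c
  proof (cases c)
    case True
    then show ?thesis using half[of k] by (simp add: vimage_def Int_def conj_commute)
  next
    case False
    have "{\<omega>\<in>space M. Z k \<omega>} \<in> events" using measurable_sets[OF Zm, of "{True}" k]
      by (simp add: vimage_def Int_def conj_commute)
    then have "prob (space M - {\<omega>\<in>space M. Z k \<omega>}) = 1 - 1/2" using half[of k] by (simp add: prob_compl)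
    moreover have "space M - {\<omega>\<in>space M. Z k \<omega>} = Z k -` {c} \<inter> space M" using False by auto
    ultimately show ?thesis by simp
  qed
  have pv: "pv M (\<lambda>\<omega>. map (\<lambda>k. Z k \<omega>) ks) v = (1/2) ^ length ks" if v: "length v = length ks" for v
  proof (cases "ks = []")
    case True
    then show ?thesis using v by (simp add: pv_def prob_space)
  next
    case False
    define A where "A k = {the (map_of (zip ks v) k)}" for k
    have "{\<omega>\<in>space M. map (\<lambda>k. Z k \<omega>) ks = v} = (\<Inter>k\<in>set ks. Z k -` A k \<inter> space M)"
      using map_eq_iff_map_of[OF ks v] False by (auto simp: A_def)
    moreover have "prob (\<Inter>k\<in>set ks. Z k -` A k \<inter> space M) = (\<Prod>k\<in>set ks. prob (Z k -` A k \<inter> space M))"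
      by (rule indep_varsD[OF ind]) (use False in auto)
    moreover have "(\<Prod>k\<in>set ks. prob (Z k -` A k \<inter> space M)) = (1/2) ^ length ks"
    proof -
      have "(\<Prod>k\<in>set ks. prob (Z k -` A k \<inter> space M)) = (\<Prod>k\<in>set ks. 1/2)"
        by (rule prod.cong[OF refl]) (unfold A_def, rule pZ)
      then show ?thesis using ks by (simp add: distinct_card)
    qed
    ultimately show ?thesis by (simp add: pv_def)
  qed
  define S where "S = {v :: bool list. length v = length ks}"
  have finS: "finite S" and cardS: "card S = 2 ^ length ks"
    using finite_lists_length_eq[of "UNIV :: bool set"] card_lists_length_eq[of "UNIV :: bool set"]
    by (auto simp: S_def)
  have "ent M (\<lambda>\<omega>. map (\<lambda>k. Z k \<omega>) ks) = - (\<Sum>v\<in>S. pv M (\<lambda>\<omega>. map (\<lambda>k. Z k \<omega>) ks) v * ln (pv M (\<lambda>\<omega>. map (\<lambda>k. Z k \<omega>) ks) v))"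
    by (rule ent_superset[OF finS]) (auto simp: S_def)
  also have "\<dots> = - (\<Sum>v\<in>S. (1/2) ^ length ks * ln ((1/2) ^ length ks))"
    by (intro arg_cong[where f=uminus] sum.cong refl) (simp add: pv S_def)
  also have "\<dots> = - (2 ^ length ks * ((1/2) ^ length ks * (real (length ks) * ln (1/2))))"
    by (simp add: cardS ln_realpow)
  also have "\<dots> = real (length ks) * ln 2"
    by (simp add: ln_div power_one_over)
  finally show ?thesis .
qed

end


lemma bin_entropy_sym: "bin_entropy (1 - p) = bin_entropy p"
  by (simp add: bin_entropy_def algebra_simps)

lemma bin_entropy_deriv:
  assumes "0 < x" "x < 1"
  shows "(bin_entropy has_real_derivative (ln (1 - x) - ln x)) (at x)"
proof -
  have "((\<lambda>x. - x * ln x - (1 - x) * ln (1 - x)) has_real_derivative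
        (- (1 * ln x + x * (1 / x)) - ((-1) * ln (1 - x) + (1 - x) * ((-1) / (1 - x))))) (at x)"
    using assms by (auto intro!: derivative_eq_intros)
  moreover have "- (1 * ln x + x * (1 / x)) - ((-1) * ln (1 - x) + (1 - x) * ((-1) / (1 - x))) = ln (1 - x) - ln x"
    using assms by (simp add: field_simps)
  ultimately show ?thesis unfolding bin_entropy_def[abs_def] by simp
qed

lemma bin_entropy_nonneg: "0 \<le> p \<Longrightarrow> p \<le> 1 \<Longrightarrow> 0 \<le> bin_entropy p"
proof -
  assume p: "0 \<le> p" "p \<le> 1"
  have a: "p * ln p \<le> 0" using p by (cases "p = 0") (auto intro!: mult_nonneg_nonpos)
  have b: "(1 - p) * ln (1 - p) \<le> 0" using p by (cases "p = 1") (auto intro!: mult_nonneg_nonpos)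
  show ?thesis using a b by (simp add: bin_entropy_def)
qed

lemma bin_entropy_mono:
  assumes "0 \<le> p" "p \<le> q" "q \<le> 1/2"
  shows "bin_entropy p \<le> bin_entropy q"
proof (cases "p = 0")
  case True
  then show ?thesis using assms bin_entropy_nonneg[of q] by (simp add: bin_entropy_def)
next
  case False
  then have p: "0 < p" using assms by simp
  show ?thesis
  proof (rule DERIV_nonneg_imp_nondecreasing[OF assms(2)])
    fix x assume x: "p \<le> x" "x \<le> q"
    then have "0 < x" "x < 1" using p assms by auto
    moreover have "ln x \<le> ln (1 - x)" using x p assms by (subst ln_le_cancel_iff) auto
    ultimately show "\<exists>y. DERIV bin_entropy x :> y \<and> 0 \<le> y"
      using bin_entropy_deriv by (intro exI[of _ "ln (1 - x) - ln x"]) auto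
  qed
qed

lemma bin_entropy_half: "bin_entropy (1/2) = ln 2"
  by (simp add: bin_entropy_def ln_div)

lemma bin_entropy_less_ln2:
  assumes "1/2 < \<delta>" "\<delta> < 1"
  shows "bin_entropy \<delta> < ln 2"
proof -
  define c where "c = (1 - \<delta> + 1/2) / 2"
  have c: "1 - \<delta> < c" "c < 1/2" using assms by (auto simp: c_def)
  have "bin_entropy (1 - \<delta>) < bin_entropy c"
  proof (rule DERIV_pos_imp_increasing[OF c(1)])
    fix x assume x: "1 - \<delta> \<le> x" "x \<le> c"
    then have "0 < x" "x < 1" using assms c by auto
    moreover have "ln x < ln (1 - x)" using x c assms by (subst ln_less_cancel_iff) auto
    ultimately show "\<exists>y. DERIV bin_entropy x :> y \<and> 0 < y"
      using bin_entropy_deriv by (intro exI[of _ "ln (1 - x) - ln x"]) auto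
  qed
  also have "bin_entropy c \<le> bin_entropy (1/2)"
    by (rule bin_entropy_mono) (use c assms in auto)
  finally show ?thesis by (simp add: bin_entropy_sym bin_entropy_half)
qed

lemma xlnx_bound:
  fixes q :: real
  assumes "0 \<le> q" "q \<le> 1"
  shows "0 \<le> - (q * ln q) \<and> - (q * ln q) \<le> 2 * sqrt q"
proof (cases "q = 0")
  case True then show ?thesis by simp
next
  case False
  then have q: "0 < q" using assms by simp
  have "ln q \<le> 0" using q assms by simp
  then have nn: "0 \<le> - (q * ln q)" using q by (simp add: mult_nonneg_nonpos)
  have "ln (1 / sqrt q) \<le> 1 / sqrt q - 1" using q by (intro ln_le_minus_one) simp
  moreover have "ln (1 / sqrt q) = - ln q / 2" using q by (simp add: ln_div ln_sqrt)
  ultimately have "- ln q \<le> 2 / sqrt q" by simp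
  then have "q * (- ln q) \<le> q * (2 / sqrt q)" using q by (intro mult_left_mono) auto
  also have "q * (2 / sqrt q) = 2 * sqrt q" using q
    by (metis real_div_sqrt less_eq_real_def times_divide_eq_right mult.commute)
  finally show ?thesis using nn by simp
qed

lemma bin_entropy_lim:
  assumes q: "\<And>m. 0 \<le> q m" "\<And>m. q m \<le> 1" and lim: "q \<longlonglongrightarrow> 0"
  shows "(\<lambda>m. bin_entropy (q m)) \<longlonglongrightarrow> 0"
proof -
  have a: "(\<lambda>m. - (q m * ln (q m))) \<longlonglongrightarrow> 0"
  proof (rule tendsto_sandwich[where f="\<lambda>_. 0" and h="\<lambda>m. 2 * sqrt (q m)"])
    show "\<forall>\<^sub>F m in sequentially. 0 \<le> - (q m * ln (q m))" using xlnx_bound q by auto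
    show "\<forall>\<^sub>F m in sequentially. - (q m * ln (q m)) \<le> 2 * sqrt (q m)" using xlnx_bound q by auto
    show "(\<lambda>_. 0) \<longlonglongrightarrow> (0::real)" by simp
    have "(\<lambda>m. 2 * sqrt (q m)) \<longlonglongrightarrow> 2 * sqrt 0" by (intro tendsto_intros lim)
    then show "(\<lambda>m. 2 * sqrt (q m)) \<longlonglongrightarrow> 0" by simp
  qed
  have b: "(\<lambda>m. (1 - q m) * ln (1 - q m)) \<longlonglongrightarrow> (1 - 0) * ln (1 - 0)"
    by (intro tendsto_intros lim) simp
  have "(\<lambda>m. - (q m * ln (q m)) - (1 - q m) * ln (1 - q m)) \<longlonglongrightarrow> 0 - (1 - 0) * ln (1 - 0)"
    by (intro tendsto_diff a b)
  then show ?thesis by (simp add: bin_entropy_def)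
qed



lemma seq_lemma:
  fixes H :: "nat \<Rightarrow> real"
  assumes H0: "H 0 = 0" and inc: "\<And>N. H N \<le> H (Suc N)"
    and dec: "\<And>N. H (Suc (Suc N)) + H N \<le> 2 * H (Suc N)"
  shows "\<exists>L. (\<lambda>n. H n / real n) \<longlonglongrightarrow> L \<and> (\<forall>n m. real n * L \<le> H (m + n) - H m)"
proof -
  define d where "d N = H (Suc N) - H N" for N
  have "decseq d" unfolding decseq_Suc_iff d_def using dec by (simp add: algebra_simps)
  moreover have "\<forall>i. 0 \<le> d i" using inc by (simp add: d_def)
  ultimately obtain L where dL: "d \<longlonglongrightarrow> L" and Lle: "\<forall>i. L \<le> d i"
    using decseq_convergent by blast
  have L0: "0 \<le> L" using dL \<open>\<forall>i. 0 \<le> d i\<close> by (intro LIMSEQ_le_const) auto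
  have low: "real n * L \<le> H (m + n) - H m" for n m
  proof (induction n)
    case 0 then show ?case by simp
  next
    case (Suc n)
    have "L \<le> H (m + Suc n) - H (m + n)" using Lle[rule_format, of "m + n"] by (simp add: d_def)
    then show ?case using Suc by (simp add: algebra_simps)
  qed
  have "(\<lambda>n. H n / real n) \<longlonglongrightarrow> L"
  proof (rule LIMSEQ_I)
    fix r :: real assume r: "0 < r"
    obtain N0 where N0: "\<forall>i\<ge>N0. norm (d i - L) < r / 2"
      using LIMSEQ_D[OF dL, of "r/2"] r by auto
    have up: "H (N0 + k) - H N0 \<le> real k * (L + r / 2)" for k
    proof (induction k)
      case 0 then show ?case by simp
    next
      case (Suc k)
      have "\<bar>d (N0 + k) - L\<bar> < r / 2" using N0[rule_format, of "N0 + k"] by simp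
      then have "d (N0 + k) - L < r / 2" by (rule order.strict_trans1[OF abs_ge_self])
      then have "d (N0 + k) < L + r / 2" by linarith
      then have "H (Suc (N0 + k)) < L + (H (N0 + k) + r / 2)" by (simp add: d_def)
      then show ?case using Suc by (simp add: algebra_simps add_divide_distrib)
    qed
    have "0 \<le> real N0 * L" using L0 by simp
    then have HN0: "0 \<le> H N0" using low[of N0 0] H0 by simp
    obtain N1 :: nat where N1: "real N1 > 2 * H N0 / r" using reals_Archimedean2 by blast
    show "\<exists>no. \<forall>n\<ge>no. norm (H n / real n - L) < r"
    proof (intro exI[of _ "max (Suc N0) N1"] allI impI)
      fix n assume n: "max (Suc N0) N1 \<le> n"
      then have npos: "0 < real n" by simp
      have "real n * L \<le> H n" using low[of n 0] H0 by simp
      then have lo: "L \<le> H n / real n" using npos by (simp add: field_simps)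
      obtain k where k: "n = N0 + k" using n by (metis le_Suc_ex max.bounded_iff Suc_leD)
      have "H n \<le> H N0 + real k * (L + r / 2)" using up[of k] k by simp
      also have "\<dots> \<le> H N0 + real n * (L + r / 2)" using k L0 r by (intro add_left_mono mult_right_mono) auto
      finally have "H n / real n \<le> H N0 / real n + (L + r / 2)" using npos by (simp add: field_simps)
      moreover have "H N0 / real n < r / 2"
      proof -
        have "2 * H N0 / r < real n" using N1 n by linarith
        then show ?thesis using r npos by (simp add: field_simps)
      qed
      ultimately have "H n / real n < L + r" by linarith
      then show "norm (H n / real n - L) < r" using lo by simp
    qed
  qed
  then show ?thesis using low by blast
qed



context prob_space
begin

lemma key:
  fixes X :: "int \<Rightarrow> 'a \<Rightarrow> 'b::finite" and Z :: "nat \<Rightarrow> 'a \<Rightarrow> bool"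
  assumes Xm: "\<And>i. X i \<in> M \<rightarrow>\<^sub>M count_space UNIV" and st: "stationary M X"
    and Zm: "\<And>k. rv M (Z k)"
    and ZH: "\<And>ks. distinct ks \<Longrightarrow> ent M (\<lambda>\<omega>. map (\<lambda>k. Z k \<omega>) ks) = real (length ks) * ln 2"
    and lim: "\<And>k t. (\<lambda>m. measure M {\<omega>\<in>space M. s k (block X t m \<omega>) = Z k \<omega>}) \<longlonglongrightarrow> 1"
    and hlow: "\<And>n m. real n * h \<le> ent M (block X 0 (m + n)) - ent M (block X 0 m)"
    and F: "finite F" "F \<subseteq> U_delta M X Z s \<delta> n"
    and \<delta>: "1/2 < \<delta>" "\<delta> < 1"
  shows "real (card F) * (ln 2 - bin_entropy \<delta>) \<le> ent M (block X 0 n) - real n * h"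
proof -
  define ks where "ks = sorted_list_of_set F"
  have ks: "distinct ks" "set ks = F" "length ks = card F" using F by (auto simp: ks_def)
  define Zs where "Zs = (\<lambda>\<omega>. map (\<lambda>k. Z k \<omega>) ks)"
  have Zs: "rv M Zs" unfolding Zs_def by (rule rv_map[OF Zm])
  define A where "A = block X 0 n"
  have A: "rv M A" unfolding A_def by (rule rv_block[OF Xm])
  define q where "q k m = pv M (\<lambda>\<omega>. Z k \<omega> \<noteq> s k (block X (int n) m \<omega>)) True" for k m
  have sl: "sum_list (map f ks) = sum f F" for f :: "nat \<Rightarrow> real"
    using ks by (simp add: sum_list_distinct_conv_sum_set)
  have compl: "pv M (\<lambda>\<omega>. Z k \<omega> \<noteq> s k (V \<omega>)) True = 1 - measure M {\<omega>\<in>space M. s k (V \<omega>) = Z k \<omega>}"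
    if V: "rv M V" for k and V :: "'a \<Rightarrow> 'b list"
  proof -
    have E: "{\<omega>\<in>space M. s k (V \<omega>) = Z k \<omega>} \<in> events"
      using rv_sets[OF rv_comp[OF rv_pair[OF V Zm[of k]], of "\<lambda>(v, z). s k v = z"], of True] by simp
    have "{\<omega>\<in>space M. (Z k \<omega> \<noteq> s k (V \<omega>)) = True} = space M - {\<omega>\<in>space M. s k (V \<omega>) = Z k \<omega>}"
      by auto
    then show ?thesis using prob_compl[OF E] by (simp add: pv_def)
  qed
  have bound: "real n * h \<le> ent M A - (real (card F) * (ln 2 - bin_entropy \<delta>) - (\<Sum>k\<in>F. bin_entropy (q k m)))" for m
  proof -
    define B where "B = block X (int n) m"
    have B: "rv M B" unfolding B_def by (rule rv_block[OF Xm])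
    have eAB: "ent M (\<lambda>\<omega>. (A \<omega>, B \<omega>)) = ent M (block X 0 (m + n))"
      using ent_join[OF Xm, where t=0 and a=n and b=m] by (simp add: A_def B_def add.commute)
    have eB: "ent M B = ent M (block X 0 m)" unfolding B_def by (rule ent_block_stat[OF Xm st])
    have i1: "real n * h \<le> ent M (\<lambda>\<omega>. (A \<omega>, B \<omega>)) - ent M B" using hlow[of n m] eAB eB by simp
    have AB: "rv M (\<lambda>\<omega>. (A \<omega>, B \<omega>))" by (rule rv_pair[OF A B])
    have s1: "ent M (\<lambda>\<omega>. (A \<omega>, B \<omega>, Zs \<omega>)) + ent M Zs \<le> ent M (\<lambda>\<omega>. (A \<omega>, Zs \<omega>)) + ent M (\<lambda>\<omega>. (B \<omega>, Zs \<omega>))"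
      by (rule ent_submod[OF A B Zs])
    have s2: "ent M (\<lambda>\<omega>. (A \<omega>, B \<omega>)) \<le> ent M (\<lambda>\<omega>. (Zs \<omega>, (A \<omega>, B \<omega>)))"
      by (rule ent_mono2[OF Zs AB])
    have s3: "ent M (\<lambda>\<omega>. (A \<omega>, B \<omega>, Zs \<omega>)) = ent M (\<lambda>\<omega>. (Zs \<omega>, (A \<omega>, B \<omega>)))"
      by (rule ent_inj'[OF rv_pair[OF Zs AB], where g="\<lambda>(z, (a, b)). (a, b, z)"]) (auto simp: inj_on_def)
    have swapA: "ent M (\<lambda>\<omega>. (A \<omega>, Zs \<omega>)) = ent M (\<lambda>\<omega>. (Zs \<omega>, A \<omega>))"
      by (rule ent_inj'[OF rv_pair[OF Zs A], where g="\<lambda>(z, a). (a, z)"]) (auto simp: inj_on_def)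
    have swapB: "ent M (\<lambda>\<omega>. (B \<omega>, Zs \<omega>)) = ent M (\<lambda>\<omega>. (Zs \<omega>, B \<omega>))"
      by (rule ent_inj'[OF rv_pair[OF Zs B], where g="\<lambda>(z, a). (a, z)"]) (auto simp: inj_on_def)
    have cA: "ent M (\<lambda>\<omega>. (Zs \<omega>, A \<omega>)) - ent M A
        \<le> (\<Sum>k\<leftarrow>ks. ent M (\<lambda>\<omega>. (Z k \<omega>, s k (A \<omega>))) - ent M (\<lambda>\<omega>. s k (A \<omega>)))"
      unfolding Zs_def by (rule ent_cond_list[OF Zm A])
    have cB: "ent M (\<lambda>\<omega>. (Zs \<omega>, B \<omega>)) - ent M B
        \<le> (\<Sum>k\<leftarrow>ks. ent M (\<lambda>\<omega>. (Z k \<omega>, s k (B \<omega>))) - ent M (\<lambda>\<omega>. s k (B \<omega>)))"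
      unfolding Zs_def by (rule ent_cond_list[OF Zm B])
    have tA: "ent M (\<lambda>\<omega>. (Z k \<omega>, s k (A \<omega>))) - ent M (\<lambda>\<omega>. s k (A \<omega>)) \<le> bin_entropy \<delta>" if k: "k \<in> F" for k
    proof -
      have "ent M (\<lambda>\<omega>. (Z k \<omega>, s k (A \<omega>))) - ent M (\<lambda>\<omega>. s k (A \<omega>))
          \<le> bin_entropy (pv M (\<lambda>\<omega>. Z k \<omega> \<noteq> s k (A \<omega>)) True)"
        by (rule ent_binary[OF Zm rv_comp[OF A]])
      also have "pv M (\<lambda>\<omega>. Z k \<omega> \<noteq> s k (A \<omega>)) True = 1 - measure M {\<omega>\<in>space M. s k (A \<omega>) = Z k \<omega>}"
        by (rule compl[OF A])
      also have "bin_entropy (1 - measure M {\<omega>\<in>space M. s k (A \<omega>) = Z k \<omega>}) \<le> bin_entropy (1 - \<delta>)"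
      proof (rule bin_entropy_mono)
        have "\<delta> \<le> measure M {\<omega>\<in>space M. s k (A \<omega>) = Z k \<omega>}"
          using F k by (auto simp: U_delta_def A_def)
        then show "1 - measure M {\<omega>\<in>space M. s k (A \<omega>) = Z k \<omega>} \<le> 1 - \<delta>" by simp
        show "0 \<le> 1 - measure M {\<omega>\<in>space M. s k (A \<omega>) = Z k \<omega>}" by simp
        show "1 - \<delta> \<le> 1/2" using \<delta> by simp
      qed
      finally show ?thesis by (simp add: bin_entropy_sym)
    qed
    have tB: "ent M (\<lambda>\<omega>. (Z k \<omega>, s k (B \<omega>))) - ent M (\<lambda>\<omega>. s k (B \<omega>)) \<le> bin_entropy (q k m)" for k
      unfolding q_def B_def by (rule ent_binary[OF Zm rv_comp[OF rv_block[OF Xm]]])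
    have sA: "(\<Sum>k\<leftarrow>ks. ent M (\<lambda>\<omega>. (Z k \<omega>, s k (A \<omega>))) - ent M (\<lambda>\<omega>. s k (A \<omega>))) \<le> real (card F) * bin_entropy \<delta>"
    proof -
      have "(\<Sum>k\<leftarrow>ks. ent M (\<lambda>\<omega>. (Z k \<omega>, s k (A \<omega>))) - ent M (\<lambda>\<omega>. s k (A \<omega>)))
          = (\<Sum>k\<in>F. ent M (\<lambda>\<omega>. (Z k \<omega>, s k (A \<omega>))) - ent M (\<lambda>\<omega>. s k (A \<omega>)))" by (rule sl)
      also have "\<dots> \<le> (\<Sum>k\<in>F. bin_entropy \<delta>)" by (rule sum_mono) (rule tA)
      finally show ?thesis by simp
    qed
    have sB: "(\<Sum>k\<leftarrow>ks. ent M (\<lambda>\<omega>. (Z k \<omega>, s k (B \<omega>))) - ent M (\<lambda>\<omega>. s k (B \<omega>))) \<le> (\<Sum>k\<in>F. bin_entropy (q k m))"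
    proof -
      have "(\<Sum>k\<leftarrow>ks. ent M (\<lambda>\<omega>. (Z k \<omega>, s k (B \<omega>))) - ent M (\<lambda>\<omega>. s k (B \<omega>)))
          = (\<Sum>k\<in>F. ent M (\<lambda>\<omega>. (Z k \<omega>, s k (B \<omega>))) - ent M (\<lambda>\<omega>. s k (B \<omega>)))" by (rule sl)
      also have "\<dots> \<le> (\<Sum>k\<in>F. bin_entropy (q k m))" by (rule sum_mono) (rule tB)
      finally show ?thesis .
    qed
    have eZ: "ent M Zs = real (card F) * ln 2" unfolding Zs_def using ZH[OF ks(1)] ks(3) by simp
    show ?thesis using i1 s1 s2 s3 swapA swapB cA cB sA sB eZ by (simp add: algebra_simps)
  qed
  have qlim: "(\<lambda>m. bin_entropy (q k m)) \<longlonglongrightarrow> 0" for k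
  proof (rule bin_entropy_lim)
    show "0 \<le> q k m" for m by (simp add: q_def pv_nonneg)
    show "q k m \<le> 1" for m by (simp add: q_def pv_le1)
    have "(\<lambda>m. 1 - measure M {\<omega>\<in>space M. s k (block X (int n) m \<omega>) = Z k \<omega>}) \<longlonglongrightarrow> 1 - 1"
      by (intro tendsto_intros lim)
    moreover have "q k m = 1 - measure M {\<omega>\<in>space M. s k (block X (int n) m \<omega>) = Z k \<omega>}" for m
      unfolding q_def by (rule compl[OF rv_block[OF Xm]])
    ultimately show "(\<lambda>m. q k m) \<longlonglongrightarrow> 0" by simp
  qed
  have "(\<lambda>m. real (card F) * (ln 2 - bin_entropy \<delta>) - (\<Sum>k\<in>F. bin_entropy (q k m)))
      \<longlonglongrightarrow> real (card F) * (ln 2 - bin_entropy \<delta>) - (\<Sum>k\<in>F. 0)"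
    by (intro tendsto_intros qlim)
  then have lim2: "(\<lambda>m. real (card F) * (ln 2 - bin_entropy \<delta>) - (\<Sum>k\<in>F. bin_entropy (q k m)))
      \<longlonglongrightarrow> real (card F) * (ln 2 - bin_entropy \<delta>)" by simp
  have "real (card F) * (ln 2 - bin_entropy \<delta>) \<le> ent M A - real n * h"
  proof (rule LIMSEQ_le_const2[OF lim2])
    show "\<exists>N. \<forall>m\<ge>N. real (card F) * (ln 2 - bin_entropy \<delta>) - (\<Sum>k\<in>F. bin_entropy (q k m)) \<le> ent M A - real n * h"
      using bound by (intro exI[of _ 0]) (auto simp: algebra_simps)
  qed
  then show ?thesis by (simp add: A_def)
qed

end


theorem theorem8:
  fixes M :: "'w measure" and X :: "int \<Rightarrow> 'w \<Rightarrow> 'a::finite"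
    and Z :: "nat \<Rightarrow> 'w \<Rightarrow> bool" and s :: "nat \<Rightarrow> 'a list \<Rightarrow> bool" and \<delta> :: real
  assumes "prob_space M"
    and "\<And>i. X i \<in> M \<rightarrow>\<^sub>M count_space UNIV"
    and "stationary M X"
    and "prob_space.indep_vars M (\<lambda>_. count_space UNIV) Z UNIV"
    and "\<And>k. measure M {\<omega>\<in>space M. Z k \<omega>} = 1/2"
    and "\<And>k t. (\<lambda>n. measure M {\<omega>\<in>space M. s k (block X t n \<omega>) = Z k \<omega>}) \<longlonglongrightarrow> 1"
    and "1/2 < \<delta>" and "\<delta> < 1"
  shows "(\<forall>n. finite (U_delta M X Z s \<delta> n) \<and> block_entropy M X n \<ge> HU M X Z s \<delta> n)
       \<and> (\<lambda>n. block_entropy M X n / real n) \<longlonglongrightarrow> entropy_rate M X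
       \<and> (\<lambda>n. HU M X Z s \<delta> n / real n) \<longlonglongrightarrow> entropy_rate M X"
proof -
  interpret prob_space M by fact
  note Xm = assms(2) and st = assms(3) and ind = assms(4) and \<delta> = assms(7,8)
  have Zm: "rv M (Z k)" for k
    using ind unfolding indep_vars_def by (auto intro!: rv_meas)
  define Hn where "Hn n = ent M (block X 0 n)" for n
  have BE: "block_entropy M X n = Hn n" for n unfolding Hn_def by (rule block_entropy_ent[OF Xm])
  have stat: "ent M (block X t n) = Hn n" for t n unfolding Hn_def by (rule ent_block_stat[OF Xm st])
  have H0: "Hn 0 = 0"
  proof -
    have "block X 0 0 = (\<lambda>\<omega>. [])" by (simp add: block_def fun_eq_iff)
    then show ?thesis by (simp add: Hn_def ent_const)
  qed
  have inc: "Hn N \<le> Hn (Suc N)" for N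
  proof -
    have "ent M (block X 1 N) \<le> ent M (\<lambda>\<omega>. (block X 0 1 \<omega>, block X 1 N \<omega>))"
      by (rule ent_mono2[OF rv_block[OF Xm] rv_block[OF Xm]])
    also have "\<dots> = ent M (block X 0 (1 + N))"
      using ent_join[OF Xm, where t=0 and a=1 and b=N] by simp
    finally show ?thesis using stat[of 1 N] by (simp add: Hn_def)
  qed
  have dec: "Hn (Suc (Suc N)) + Hn N \<le> 2 * Hn (Suc N)" for N
  proof -
    define X1 where "X1 = block X 0 1"
    define Y where "Y = block X 1 N"
    define W where "W = block X (1 + int N) 1"
    have rX1: "rv M X1" and rY: "rv M Y" and rW: "rv M W"
      unfolding X1_def Y_def W_def by (rule rv_block[OF Xm])+
    have s: "ent M (\<lambda>\<omega>. (X1 \<omega>, W \<omega>, Y \<omega>)) + ent M Y \<le> ent M (\<lambda>\<omega>. (X1 \<omega>, Y \<omega>)) + ent M (\<lambda>\<omega>. (W \<omega>, Y \<omega>))"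
      by (rule ent_submod[OF rX1 rW rY])
    have app: "block X 0 (Suc (Suc N)) \<omega> = X1 \<omega> @ Y \<omega> @ W \<omega>" for \<omega>
      using block_append[of X 0 "1 + N" 1 \<omega>] block_append[of X 0 1 N \<omega>]
      by (simp add: X1_def Y_def W_def)
    have e1: "ent M (block X 0 (Suc (Suc N))) = ent M (\<lambda>\<omega>. (X1 \<omega>, W \<omega>, Y \<omega>))"
    proof (rule ent_inj'[OF rv_pair[OF rX1 rv_pair[OF rW rY]], where g="\<lambda>(x, w, y). x @ y @ w"])
      show "inj_on (\<lambda>(x, w, y). x @ y @ w) ((\<lambda>\<omega>. (X1 \<omega>, W \<omega>, Y \<omega>)) ` space M)"
        by (auto simp: inj_on_def X1_def Y_def W_def)
      show "block X 0 (Suc (Suc N)) = (\<lambda>\<omega>. (\<lambda>(x, w, y). x @ y @ w) (X1 \<omega>, W \<omega>, Y \<omega>))"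
        using app by (simp add: fun_eq_iff)
    qed
    have e2: "ent M (\<lambda>\<omega>. (X1 \<omega>, Y \<omega>)) = Hn (Suc N)"
      using ent_join[OF Xm, where t=0 and a=1 and b=N] by (simp add: X1_def Y_def Hn_def)
    have e3: "ent M (\<lambda>\<omega>. (W \<omega>, Y \<omega>)) = Hn (Suc N)"
    proof -
      have "ent M (\<lambda>\<omega>. (W \<omega>, Y \<omega>)) = ent M (\<lambda>\<omega>. (Y \<omega>, W \<omega>))"
        by (rule ent_inj'[OF rv_pair[OF rY rW], where g="\<lambda>(a, b). (b, a)"]) (auto simp: inj_on_def)
      also have "\<dots> = ent M (block X 1 (N + 1))"
        using ent_join[OF Xm, where t=1 and a=N and b=1] by (simp add: Y_def W_def)
      finally show ?thesis using stat[of 1 "N + 1"] by simp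
    qed
    have e4: "ent M Y = Hn N" unfolding Y_def by (rule stat)
    show ?thesis using s e1 e2 e3 e4 by (simp add: Hn_def)
  qed
  obtain L where conv: "(\<lambda>n. Hn n / real n) \<longlonglongrightarrow> L" and low: "\<forall>n m. real n * L \<le> Hn (m + n) - Hn m"
    using seq_lemma[of Hn, OF H0 inc dec] by blast
  have conv': "(\<lambda>n. block_entropy M X n / real n) \<longlonglongrightarrow> L" using conv by (simp add: BE)
  have rate: "entropy_rate M X = L"
    unfolding entropy_rate_def using conv' by (rule limI)
  have ZH: "ent M (\<lambda>\<omega>. map (\<lambda>k. Z k \<omega>) ks) = real (length ks) * ln 2" if "distinct ks" for ks
    by (rule ent_Zs[OF ind assms(5) that])
  define c where "c = ln 2 - bin_entropy \<delta>"
  have c: "0 < c" using bin_entropy_less_ln2[OF \<delta>] by (simp add: c_def)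
  have keyF: "real (card F) * c \<le> Hn n - real n * L" if "finite F" "F \<subseteq> U_delta M X Z s \<delta> n" for n F
    unfolding c_def Hn_def
    by (rule key[OF Xm st Zm ZH assms(6) _ that \<delta>]) (use low in \<open>auto simp: Hn_def\<close>)
  have finU: "finite (U_delta M X Z s \<delta> n)" for n
  proof (rule ccontr)
    assume inf: "infinite (U_delta M X Z s \<delta> n)"
    define N where "N = nat \<lceil>(Hn n - real n * L) / c\<rceil> + 1"
    obtain F where F: "finite F" "card F = N" "F \<subseteq> U_delta M X Z s \<delta> n"
      using infinite_arbitrarily_large[OF inf] by blast
    have "real N * c \<le> Hn n - real n * L" using keyF[OF F(1,3)] F(2) by simp
    moreover have "(Hn n - real n * L) / c < real N"
      unfolding N_def by linarith
    ultimately show False using c by (simp add: field_simps)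
  qed
  have ineq: "c * real (card (U_delta M X Z s \<delta> n)) \<le> Hn n - real n * L" for n
    using keyF[OF finU subset_refl, of n] by (simp add: mult.commute)
  have part1: "\<forall>n. finite (U_delta M X Z s \<delta> n) \<and> block_entropy M X n \<ge> HU M X Z s \<delta> n"
    using finU ineq by (auto simp: HU_def BE rate c_def algebra_simps)
  have small: "(\<lambda>n. c * real (card (U_delta M X Z s \<delta> n)) / real n) \<longlonglongrightarrow> 0"
  proof (rule tendsto_sandwich[where f="\<lambda>_. 0" and h="\<lambda>n. Hn n / real n - L"])
    show "\<forall>\<^sub>F n in sequentially. 0 \<le> c * real (card (U_delta M X Z s \<delta> n)) / real n"
      using c by auto
    show "\<forall>\<^sub>F n in sequentially. c * real (card (U_delta M X Z s \<delta> n)) / real n \<le> Hn n / real n - L"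
    proof (rule eventually_sequentiallyI[of 1])
      fix n :: nat assume n: "1 \<le> n"
      have "c * real (card (U_delta M X Z s \<delta> n)) / real n \<le> (Hn n - real n * L) / real n"
        using ineq[of n] n by (intro divide_right_mono) auto
      also have "\<dots> = Hn n / real n - L" using n by (simp add: field_simps)
      finally show "c * real (card (U_delta M X Z s \<delta> n)) / real n \<le> Hn n / real n - L" .
    qed
    show "(\<lambda>_. 0) \<longlonglongrightarrow> (0::real)" by simp
    show "(\<lambda>n. Hn n / real n - L) \<longlonglongrightarrow> 0" using conv by (simp add: LIM_zero)
  qed
  have "(\<lambda>n. L + c * real (card (U_delta M X Z s \<delta> n)) / real n) \<longlonglongrightarrow> L + 0"
    by (intro tendsto_intros small)
  then have limL: "(\<lambda>n. L + c * real (card (U_delta M X Z s \<delta> n)) / real n) \<longlonglongrightarrow> L" by simp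
  have part3: "(\<lambda>n. HU M X Z s \<delta> n / real n) \<longlonglongrightarrow> L"
  proof (rule Lim_transform_eventually[OF limL])
    show "\<forall>\<^sub>F n in sequentially. L + c * real (card (U_delta M X Z s \<delta> n)) / real n = HU M X Z s \<delta> n / real n"
    proof (rule eventually_sequentiallyI[of 1])
      fix n :: nat assume n: "1 \<le> n"
      then show "L + c * real (card (U_delta M X Z s \<delta> n)) / real n = HU M X Z s \<delta> n / real n"
        by (simp add: HU_def rate c_def field_simps)
    qed
  qed
  show ?thesis using part1 conv' part3 rate by simp
qed


end
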